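(* Let $q>1$. There is no radially symmetric $u\in C^{4}(\mathbb{R}^{2})$, $u>0$, solving $\Delta^{2}u+u^{-q}=0$ in $\mathbb{R}^{2}$. *)

theory Defs
  imports "HOL-Analysis.Analysis"
begin

text \<open>The plane R^2 is modelled as real \<times> real (whose norm is the Euclidean norm).\<close>

definition pd1 :: "(real \<times> real \<Rightarrow> real) \<Rightarrow> real \<times> real \<Rightarrow> real" where
  "pd1 u = (\<lambda>(x, y). deriv (\<lambda>t. u (t, y)) x)"

definition pd2 :: "(real \<times> real \<Rightarrow> real) \<Rightarrow> real \<times> real \<Rightarrow> real" where
  "pd2 u = (\<lambda>(x, y). deriv (\<lambda>t. u (x, t)) y)"

fun Ck :: "nat \<Rightarrow> (real \<times> real \<Rightarrow> real) \<Rightarrow> bool" where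
  "Ck 0 u = continuous_on UNIV u"
| "Ck (Suc k) u = (continuous_on UNIV u \<and>
      (\<forall>x y. (\<lambda>t. u (t, y)) differentiable (at x) \<and> (\<lambda>t. u (x, t)) differentiable (at y)) \<and>
      Ck k (pd1 u) \<and> Ck k (pd2 u))"

definition laplacian :: "(real \<times> real \<Rightarrow> real) \<Rightarrow> real \<times> real \<Rightarrow> real" where
  "laplacian u = (\<lambda>p. pd1 (pd1 u) p + pd2 (pd2 u) p)"

definition radially_symmetric :: "(real \<times> real \<Rightarrow> real) \<Rightarrow> bool" where
  "radially_symmetric u \<longleftrightarrow> (\<forall>p p'. norm p = norm p' \<longrightarrow> u p = u p')"

end

theory Submission imports Defs begin
lemma sq_der:
  fixes c a :: real
  assumes "a^2 + c^2 > 0"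
  shows "((\<lambda>t. sqrt (t^2 + c^2)) has_real_derivative a / sqrt (a^2+c^2)) (at a)"
proof -
  have "((\<lambda>t. sqrt (t^2 + c^2)) has_real_derivative inverse (sqrt (a^2+c^2)) / 2 * (2*a)) (at a)"
    by (rule DERIV_chain2[where g="\<lambda>t. t^2+c^2", OF DERIV_real_sqrt[OF assms]]) (auto intro!: derivative_eq_intros)
  then show ?thesis by (simp add: field_simps)
qed

lemma L1:
  fixes c a :: real
  assumes "a^2 + c^2 > 0"
    and "(g has_real_derivative g1) (at (sqrt (a^2+c^2)))"
  shows "((\<lambda>t. g (sqrt (t^2 + c^2))) has_real_derivative g1 * a / sqrt (a^2+c^2)) (at a)"
  using DERIV_chain2[OF assms(2) sq_der[OF assms(1)]] by simp

lemma L2: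
  fixes c a :: real
  assumes "a^2 + c^2 > 0"
    and "(g1 has_real_derivative g2) (at (sqrt (a^2+c^2)))"
  shows "((\<lambda>t. g1 (sqrt (t^2 + c^2)) * t / sqrt (t^2+c^2)) has_real_derivative
     g2 * a^2 / (a^2+c^2) + g1 (sqrt (a^2+c^2)) * c^2 / (sqrt (a^2+c^2))^3) (at a)"
proof -
  define r where "r = sqrt (a^2+c^2)"
  have r0: "r > 0" using assms(1) r_def by simp
  have rr: "r^2 = a^2+c^2" using assms(1) r_def by simp
  have d1: "((\<lambda>t. g1 (sqrt (t^2 + c^2))) has_real_derivative g2 * a / r) (at a)"
    using L1[OF assms] r_def by simp
  have d2: "((\<lambda>t. sqrt (t^2 + c^2)) has_real_derivative a / r) (at a)"
    using sq_der[OF assms(1)] r_def by simp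
  have m: "((\<lambda>t. g1 (sqrt (t^2 + c^2)) * t) has_real_derivative g2 * a / r * a + g1 r * 1) (at a)"
    using DERIV_mult[OF d1 DERIV_ident] r_def by simp
  have "((\<lambda>t. g1 (sqrt (t^2 + c^2)) * t / sqrt (t^2+c^2)) has_real_derivative
     ((g2 * a / r * a + g1 r * 1) * r - g1 r * a * (a/r)) / (r*r)) (at a)"
    using DERIV_divide[OF m d2] r0 unfolding r_def by (simp only: power2_eq_square)
  moreover have "((g2 * a / r * a + g1 r * 1) * r - g1 r * a * (a/r)) / (r*r)
     = g2 * a^2 / (a^2+c^2) + g1 r * c^2 / r^3"
  proof -
    have c2: "c^2 = r^2 - a^2" using rr by simp
    have "((g2 * a / r * a + g1 r * 1) * r - g1 r * a * (a/r)) / (r*r) = g2*a^2/r^2 + g1 r * (r^2 - a^2)/r^3"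
      using r0 by (simp add: field_simps power2_eq_square power3_eq_cube)
    then show ?thesis by (simp add: c2)
  qed
  ultimately show ?thesis using r_def by simp
qed


lemma norm_pair_real: "norm ((a::real), (b::real)) = sqrt (a^2 + b^2)"
  by (simp add: norm_Pair)

lemma radial_lap:
  fixes f :: "real \<times> real \<Rightarrow> real"
  assumes f_eq: "\<And>p. f p = g (norm p)"
    and d1: "\<And>r. r > 0 \<Longrightarrow> (g has_real_derivative g1 r) (at r)"
    and d2: "\<And>r. r > 0 \<Longrightarrow> (g1 has_real_derivative g2 r) (at r)"
    and p0: "p \<noteq> 0"
  shows "laplacian f p = g2 (norm p) + g1 (norm p) / norm p"
proof -
  have pd1f: "pd1 f (a,b) = g1 (sqrt (a^2+b^2)) * a / sqrt (a^2+b^2)" if "a^2+b^2 > 0" for a b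
  proof -
    have e: "(\<lambda>t. f (t,b)) = (\<lambda>t. g (sqrt (t^2+b^2)))" by (simp add: f_eq norm_pair_real)
    show ?thesis using L1[OF that d1] that by (simp add: pd1_def e DERIV_imp_deriv)
  qed
  have pd2f: "pd2 f (a,b) = g1 (sqrt (b^2+a^2)) * b / sqrt (b^2+a^2)" if "a^2+b^2 > 0" for a b
  proof -
    have e: "(\<lambda>t. f (a,t)) = (\<lambda>t. g (sqrt (t^2+a^2)))" by (simp add: f_eq norm_pair_real add.commute)
    have "b^2+a^2 > 0" using that by simp
    then show ?thesis using L1[OF _ d1] by (simp add: pd2_def e DERIV_imp_deriv)
  qed
  obtain x y where p: "p = (x,y)" by fastforce
  define r where "r = sqrt (x^2+y^2)"
  have xy: "x^2+y^2 > 0" using p0 p by (auto simp: sum_power2_gt_zero_iff zero_prod_def)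
  have r0: "r > 0" using xy r_def by simp
  have rr: "r^2 = x^2+y^2" using xy r_def by simp
  have np: "norm p = r" using p r_def norm_pair_real by simp
  have o1: "open {t. t^2+y^2 > (0::real)}" by (intro open_Collect_less continuous_intros)
  have o2: "open {t. x^2+t^2 > (0::real)}" by (intro open_Collect_less continuous_intros)
  have A: "pd1 (pd1 f) p = g2 r * x^2/(x^2+y^2) + g1 r * y^2 / r^3"
  proof -
    have "((\<lambda>t. pd1 f (t,y)) has_real_derivative g2 r * x^2/(x^2+y^2) + g1 r * y^2 / r^3) (at x)"
    proof -
      have "((\<lambda>t. g1 (sqrt (t^2 + y^2)) * t / sqrt (t^2+y^2)) has_real_derivative
         g2 r * x^2/(x^2+y^2) + g1 r * y^2 / r^3) (at x)"
        using L2[OF xy, of g1 "g2 r"] d2 r0 r_def by simp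
      then show ?thesis
        apply (rule has_field_derivative_transform_within_open[OF _ o1])
        using xy pd1f by auto
    qed
    then show ?thesis unfolding p pd1_def by (simp add: DERIV_imp_deriv)
  qed
  have B: "pd2 (pd2 f) p = g2 r * y^2/(x^2+y^2) + g1 r * x^2 / r^3"
  proof -
    have yx: "y^2+x^2 > 0" using xy by simp
    have rr': "sqrt (y^2+x^2) = r" using r_def by (simp add: add.commute)
    have "((\<lambda>t. g1 (sqrt (t^2 + x^2)) * t / sqrt (t^2+x^2)) has_real_derivative
         g2 r * y^2/(y^2+x^2) + g1 r * x^2 / r^3) (at y)"
      using L2[OF yx, of g1 "g2 r"] d2 r0 rr' by simp
    then have "((\<lambda>t. pd2 f (x,t)) has_real_derivative g2 r * y^2/(y^2+x^2) + g1 r * x^2 / r^3) (at y)"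
      apply (rule has_field_derivative_transform_within_open[OF _ o2])
      using xy pd2f by (auto simp: add.commute)
    then show ?thesis unfolding p pd2_def by (simp add: DERIV_imp_deriv add.commute)
  qed
  have "g2 r * x^2/(x^2+y^2) + g1 r * y^2 / r^3 + (g2 r * y^2/(x^2+y^2) + g1 r * x^2 / r^3)
       = g2 r + g1 r / r"
  proof -
    have "g2 r * x^2/(x^2+y^2) + g2 r * y^2/(x^2+y^2) = g2 r"
      using xy by (auto simp add: add_divide_distrib[symmetric] distrib_left[symmetric])
    moreover have "g1 r * y^2 / r^3 + g1 r * x^2 / r^3 = g1 r * r^2 / r^3" using rr by (simp add: add_divide_distrib[symmetric] distrib_left[symmetric] add.commute)
    moreover have "g1 r * r^2 / r^3 = g1 r / r" using r0 by (simp add: power2_eq_square power3_eq_cube)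
    ultimately show ?thesis by simp
  qed
  then show ?thesis unfolding laplacian_def using A B np by simp
qed

lemma dec_nonpos:
  fixes f :: "real \<Rightarrow> real"
  assumes "a \<le> b" "\<And>x. a \<le> x \<Longrightarrow> x \<le> b \<Longrightarrow> (f has_real_derivative f' x) (at x)"
    "\<And>x. a \<le> x \<Longrightarrow> x \<le> b \<Longrightarrow> f' x \<le> 0"
  shows "f b \<le> f a"
  using DERIV_nonpos_imp_nonincreasing[OF assms(1)] assms(2,3) by blast

lemma ode_contra:
  fixes g g1 g2 h h1 h2 :: "real \<Rightarrow> real"
  assumes g_pos: "\<And>r. r > 0 \<Longrightarrow> g r > 0"
    and dg: "\<And>r. r > 0 \<Longrightarrow> (g has_real_derivative g1 r) (at r)"
    and dg1: "\<And>r. r > 0 \<Longrightarrow> (g1 has_real_derivative g2 r) (at r)"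
    and hdef: "\<And>r. r > 0 \<Longrightarrow> h r = g2 r + g1 r / r"
    and dh: "\<And>r. r > 0 \<Longrightarrow> (h has_real_derivative h1 r) (at r)"
    and dh1: "\<And>r. r > 0 \<Longrightarrow> (h1 has_real_derivative h2 r) (at r)"
    and neg: "\<And>r. r > 0 \<Longrightarrow> h2 r + h1 r / r < 0"
    and bnd: "\<And>r. 0 < r \<Longrightarrow> r \<le> 1 \<Longrightarrow> \<bar>h1 r\<bar> \<le> M"
  shows False
proof -
  define \<phi> where "\<phi> r = r * h1 r" for r
  have dphi: "(\<phi> has_real_derivative (1 * h1 r + r * h2 r)) (at r)" if "r > 0" for r
    unfolding \<phi>_def using DERIV_mult[OF DERIV_ident dh1[OF that]] by (simp add: mult.commute)
  have dphin: "1 * h1 r + r * h2 r < 0" if "r > 0" for r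
  proof -
    have "r * (h2 r + h1 r / r) < 0" using neg[OF that] that by (simp add: mult_pos_neg)
    then show ?thesis using that by (simp add: algebra_simps)
  qed
  have phidec: "\<phi> b < \<phi> a" if "0 < a" "a < b" for a b
  proof (rule DERIV_neg_imp_decreasing[OF that(2)])
    fix x assume "a \<le> x" "x \<le> b"
    then have "x > 0" using that by simp
    then show "\<exists>y. (\<phi> has_real_derivative y) (at x) \<and> y < 0" using dphi dphin by blast
  qed
  have M0: "M \<ge> 0" using bnd[of 1] by simp
  have phineg: "\<phi> r < 0" if r0: "r > 0" for r
  proof (rule ccontr)
    assume "\<not> \<phi> r < 0"
    define s where "s = r/2"
    have s0: "0 < s" "s < r" using r0 s_def by auto
    have dpos: "\<phi> s > 0" using phidec[OF s0] \<open>\<not> \<phi> r < 0\<close> by simp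
    define t where "t = min (min s 1) (\<phi> s / (M+1)) / 2"
    have "\<phi> s / (M+1) > 0" using dpos M0 by simp
    then have t0: "0 < t" using s0 t_def by simp
    have ts: "t < s" using s0 t_def by simp
    have t1: "t \<le> 1" using t_def by simp
    have "\<phi> t > \<phi> s" using phidec[OF t0 ts] .
    moreover have "\<phi> t \<le> t * M" unfolding \<phi>_def using bnd[OF t0 t1] t0
      by (metis abs_le_D1 mult_left_mono less_imp_le)
    moreover have "t * M \<le> \<phi> s / (M+1) / 2 * M"
    proof (rule mult_right_mono[OF _ M0])
      have "2 * t \<le> \<phi> s / (M+1)" using t_def by simp
      moreover have "\<And>X::real. 2*t \<le> X \<Longrightarrow> t \<le> X/2" by simp
      ultimately show "t \<le> \<phi> s / (M+1) / 2" by blast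
    qed
    moreover have "\<phi> s / (M+1) / 2 * M < \<phi> s"
    proof -
      have "\<phi> s / (M+1) / 2 * M = \<phi> s * (M / (2*(M+1)))" by simp
      moreover have "M / (2*(M+1)) < 1" using M0 by simp
      moreover have "\<phi> s * (M / (2*(M+1))) < \<phi> s * 1"
        using mult_strict_left_mono[OF \<open>M / (2*(M+1)) < 1\<close> dpos] .
      ultimately show ?thesis by (simp add: mult.commute)
    qed
    ultimately show False by linarith
  qed
  define c where "c = - \<phi> 1"
  have c0: "c > 0" using phineg[of 1] c_def by simp
  have h1b: "h1 r \<le> - c / r" if "r \<ge> 1" for r
  proof -
    have "\<phi> r \<le> \<phi> 1" using phidec[of 1 r] that by (cases "r = 1") auto
    then have "r * h1 r \<le> -c" using c_def \<phi>_def by simp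
    then show ?thesis using that by (simp add: field_simps)
  qed
  define \<psi> where "\<psi> r = h r + c * ln r" for r
  have hb: "h r \<le> h 1 - c * ln r" if "r \<ge> 1" for r
  proof -
    have "\<psi> r \<le> \<psi> 1"
    proof (rule dec_nonpos[where f=\<psi> and a=1 and b=r and f' = "\<lambda>x. h1 x + c * inverse x"])
      fix x assume x: "1 \<le> x" "x \<le> r"
      show "(\<psi> has_real_derivative h1 x + c * inverse x) (at x)"
        unfolding \<psi>_def using x by (auto intro!: derivative_eq_intros dh simp: divide_inverse)
      show "h1 x + c * inverse x \<le> 0" using h1b[OF x(1)] by (simp add: divide_inverse)
    qed (use that in auto)
    then show ?thesis using \<psi>_def by simp
  qed
  define R where "R = exp ((\<bar>h 1\<bar> + 1) / c)"
  have R1: "R \<ge> 1" using R_def c0 by simp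
  have hneg: "h r \<le> -1" if "r \<ge> R" for r
  proof -
    have "ln r \<ge> ln R" using that R1 by simp
    then have "ln r \<ge> (\<bar>h 1\<bar> + 1) / c" using R_def by simp
    then have "c * ln r \<ge> \<bar>h 1\<bar> + 1" using c0 by (simp add: field_simps)
    then show ?thesis using hb[of r] that R1 by linarith
  qed
  define \<kappa> where "\<kappa> r = r * g1 r + r^2/2" for r
  define K where "K = \<kappa> R"
  have g1b: "r * g1 r \<le> K - r^2/2" if "r \<ge> R" for r
  proof -
    have "\<kappa> r \<le> \<kappa> R"
    proof (rule dec_nonpos[where f=\<kappa> and a=R and b=r and f' = "\<lambda>x. 1 * g1 x + x * g2 x + x"])
      fix x assume x: "R \<le> x" "x \<le> r"
      have xp: "x > 0" using x R1 by simp
      show "(\<kappa> has_real_derivative 1 * g1 x + x * g2 x + x) (at x)"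
        unfolding \<kappa>_def using xp by (auto intro!: derivative_eq_intros dg1)
      have "x * (h x + 1) \<le> 0" using hneg[OF x(1)] xp by (simp add: mult_nonneg_nonpos)
      moreover have "x * h x = g1 x + x * g2 x" using hdef[OF xp] xp by (simp add: field_simps)
      ultimately show "1 * g1 x + x * g2 x + x \<le> 0" by (simp add: distrib_left)
    qed (use that in auto)
    then show ?thesis using \<kappa>_def K_def by simp
  qed
  define R2 where "R2 = max R (2 * \<bar>K\<bar> + 2)"
  have R2p: "R2 \<ge> R" "R2 \<ge> 2 * \<bar>K\<bar> + 2" using R2_def by auto
  have g1n: "g1 r \<le> -1/2" if "r \<ge> R2" for r
  proof -
    have rp: "r > 0" "r \<ge> R" using that R2p R1 by auto
    have "g1 r \<le> K / r - r/2" using g1b[OF rp(2)] rp by (simp add: field_simps power2_eq_square)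
    moreover have "K / r \<le> 1/2"
    proof -
      have "K \<le> r / 2" using that R2p by linarith
      then show ?thesis using rp by (simp add: field_simps)
    qed
    ultimately show ?thesis using that R2p by linarith
  qed
  define \<omega> where "\<omega> r = g r + r/2" for r
  define r where "r = R2 + 2 * g R2 + 1"
  have gR2: "g R2 > 0" using g_pos R2p R1 by simp
  have "\<omega> r \<le> \<omega> R2"
  proof (rule dec_nonpos[where f=\<omega> and a=R2 and b=r and f' = "\<lambda>x. g1 x + 1/2"])
    fix x assume x: "R2 \<le> x" "x \<le> r"
    have xp: "x > 0" using x R2p R1 by simp
    show "(\<omega> has_real_derivative g1 x + 1/2) (at x)"
      unfolding \<omega>_def using xp by (auto intro!: derivative_eq_intros dg)
    show "g1 x + 1/2 \<le> 0" using g1n[OF x(1)] by simp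
  qed (use gR2 r_def in auto)
  then have "g r + r/2 \<le> g R2 + R2/2" by (simp add: \<omega>_def)
  then have gneg: "g r \<le> -1/2" using r_def by linarith
  have "r > 0" using r_def gR2 R2p R1 by simp
  then have "g r > 0" using g_pos by blast
  with gneg show False by linarith
qed

lemma Ck_cont: "Ck k F \<Longrightarrow> continuous_on UNIV F" by (cases k) auto

lemma Ck_d1: "Ck (Suc k) F \<Longrightarrow> ((\<lambda>t. F (t,y)) has_real_derivative pd1 F (t,y)) (at t)"
  by (auto simp: pd1_def DERIV_deriv_iff_real_differentiable)

lemma Ck_pd1: "Ck (Suc k) F \<Longrightarrow> Ck k (pd1 F)" by simp
lemma Ck_pd2: "Ck (Suc k) F \<Longrightarrow> Ck k (pd2 F)" by simp

theorem mainTheorem19: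
  fixes q :: real
  assumes "q > 1"
  shows "\<not> (\<exists>u :: real \<times> real \<Rightarrow> real.
            Ck 4 u \<and> radially_symmetric u \<and> (\<forall>p. u p > 0) \<and>
            (\<forall>p. laplacian (laplacian u) p + u p powr (- q) = 0))"
proof
  assume "\<exists>u :: real \<times> real \<Rightarrow> real.
            Ck 4 u \<and> radially_symmetric u \<and> (\<forall>p. u p > 0) \<and>
            (\<forall>p. laplacian (laplacian u) p + u p powr (- q) = 0)"
  then obtain u :: "real \<times> real \<Rightarrow> real" where
    c4': "Ck 4 u" and rad: "radially_symmetric u" and upos: "\<And>p. u p > 0"
    and pde: "\<And>p. laplacian (laplacian u) p + u p powr (- q) = 0" by blast
  have four: "(4::nat) = Suc (Suc (Suc (Suc 0)))" by simp
  have c4: "Ck (Suc (Suc (Suc (Suc 0)))) u" using c4' by (simp only: four)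
  have c3: "Ck (Suc (Suc (Suc 0))) (pd1 u)" "Ck (Suc (Suc (Suc 0))) (pd2 u)"
    using Ck_pd1[OF c4] Ck_pd2[OF c4] by auto
  define A where "A = pd1 (pd1 u)"
  define B where "B = pd2 (pd2 u)"
  have cA: "Ck (Suc (Suc 0)) A" using Ck_pd1[OF c3(1)] A_def by simp
  have cB: "Ck (Suc (Suc 0)) B" using Ck_pd2[OF c3(2)] B_def by simp
  define g where "g t = u (t, 0)" for t
  define g1 where "g1 t = pd1 u (t, 0)" for t
  define g2 where "g2 t = A (t, 0)" for t
  define h where "h t = laplacian u (t, 0)" for t
  define h1 where "h1 t = pd1 A (t, 0) + pd1 B (t, 0)" for t
  define h2 where "h2 t = pd1 (pd1 A) (t, 0) + pd1 (pd1 B) (t, 0)" for t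
  have dg: "(g has_real_derivative g1 r) (at r)" for r
    unfolding g_def g1_def by (rule Ck_d1[OF c4])
  have dg1: "(g1 has_real_derivative g2 r) (at r)" for r
    unfolding g1_def g2_def A_def by (rule Ck_d1[OF c3(1)])
  have heq: "h = (\<lambda>t. A (t,0) + B (t,0))" unfolding h_def A_def B_def laplacian_def by simp
  have dh: "(h has_real_derivative h1 r) (at r)" for r
    unfolding heq h1_def by (intro DERIV_add Ck_d1[OF cA] Ck_d1[OF cB])
  have dh1: "(h1 has_real_derivative h2 r) (at r)" for r
    unfolding h1_def h2_def by (intro DERIV_add Ck_d1[OF Ck_pd1[OF cA]] Ck_d1[OF Ck_pd1[OF cB]])
  have nr: "norm (r, 0::real) = \<bar>r\<bar>" for r :: real by (simp add: norm_pair_real)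
  have ueq: "u p = g (norm p)" for p
  proof -
    have "norm p = norm (norm p, 0::real)" by (simp add: nr)
    then have "u p = u (norm p, 0)" using rad unfolding radially_symmetric_def by blast
    then show ?thesis by (simp add: g_def)
  qed
  have lapu: "laplacian u p = g2 (norm p) + g1 (norm p) / norm p" if "p \<noteq> 0" for p
    using radial_lap[of u g g1 g2 p] ueq dg dg1 that by blast
  have heq2: "h r = g2 r + g1 r / r" if "r > 0" for r
  proof -
    have "(r, 0::real) \<noteq> 0" using that by (simp add: zero_prod_def)
    then show ?thesis unfolding h_def using lapu that nr by simp
  qed
  have lapeq: "laplacian u p = h (norm p)" for p
  proof (cases "p = 0")
    case True then show ?thesis by (simp add: h_def zero_prod_def)
  next
    case False then show ?thesis using lapu heq2[of "norm p"] by simp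
  qed
  have lap2: "laplacian (laplacian u) p = h2 (norm p) + h1 (norm p) / norm p" if "p \<noteq> 0" for p
    using radial_lap[of "laplacian u" h h1 h2 p] lapeq dh dh1 that by blast
  have neg: "h2 r + h1 r / r < 0" if "r > 0" for r
  proof -
    have "(r, 0::real) \<noteq> 0" using that by (simp add: zero_prod_def)
    then have "h2 r + h1 r / r = laplacian (laplacian u) (r,0)" using lap2 nr that by simp
    also have "\<dots> = - (u (r,0) powr (-q))" using pde[of "(r,0)"] by simp
    also have "\<dots> < 0" using upos[of "(r,0)"] by simp
    finally show ?thesis .
  qed
  have ch1: "continuous_on UNIV h1"
  proof -
    have cp: "continuous_on UNIV (\<lambda>t::real. (t, 0::real))" by (intro continuous_intros)
    have "continuous_on UNIV (\<lambda>t. pd1 A (t, 0))"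
      by (rule continuous_on_compose2[OF Ck_cont[OF Ck_pd1[OF cA]] cp subset_UNIV])
    moreover have "continuous_on UNIV (\<lambda>t. pd1 B (t, 0))"
      by (rule continuous_on_compose2[OF Ck_cont[OF Ck_pd1[OF cB]] cp subset_UNIV])
    ultimately have "continuous_on UNIV (\<lambda>t. pd1 A (t, 0) + pd1 B (t, 0))"
      by (rule continuous_on_add)
    then show ?thesis unfolding h1_def by simp
  qed
  have "bounded (h1 ` {0..1})"
    by (rule compact_imp_bounded[OF compact_continuous_image[OF continuous_on_subset[OF ch1 subset_UNIV]]])
       (rule compact_Icc)
  then obtain M where M: "\<And>x. x \<in> h1 ` {0..1} \<Longrightarrow> \<bar>x\<bar> \<le> M" by (auto simp: bounded_real)
  have Mb: "\<bar>h1 r\<bar> \<le> M" if "0 < r" "r \<le> 1" for r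
    using M[of "h1 r"] that by simp
  show False
  proof (rule ode_contra[of g g1 g2 h h1 h2 M])
    show "\<And>r. 0 < r \<Longrightarrow> 0 < g r" using upos g_def by simp
    show "\<And>r. 0 < r \<Longrightarrow> (g has_real_derivative g1 r) (at r)" using dg by blast
    show "\<And>r. 0 < r \<Longrightarrow> (g1 has_real_derivative g2 r) (at r)" using dg1 by blast
    show "\<And>r. 0 < r \<Longrightarrow> h r = g2 r + g1 r / r" using heq2 by blast
    show "\<And>r. 0 < r \<Longrightarrow> (h has_real_derivative h1 r) (at r)" using dh by blast
    show "\<And>r. 0 < r \<Longrightarrow> (h1 has_real_derivative h2 r) (at r)" using dh1 by blast
    show "\<And>r. 0 < r \<Longrightarrow> h2 r + h1 r / r < 0" using neg by blast
    show "\<And>r. 0 < r \<Longrightarrow> r \<le> 1 \<Longrightarrow> \<bar>h1 r\<bar> \<le> M" using Mb by blast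
  qed
qed

end
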